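(* Let $n=2$, $K\in\{-1,0,1\}$, and let $k>0$ satisfy $k^2>\max(0,2K)$. Then $-\Delta_{{}^2g}+V_{S,k}$ has trivial $L^2$-kernel on $(\mathbb R^2,{}^2g)$, where, with $m=k^2-2K$, $$V_{S,k}(r)=\frac13\Big(\frac{6\mu}{r^3}+\frac{m}{r^2}+\frac{2m^2(m+3K)+216\mu^2/\ell^2}{(6\mu+mr)^2}\Big).$$
   Context: Fix constants $\ell>0$, $\mu\in\mathbb R$. Set $f(r)=\frac{r^2}{\ell^2}+K-\frac{2\mu}{r}$ (the case $n=2$). Assume $\mu>0$ if $K\in\{0,1\}$ and $\mu>\mu_{\min}:=-\frac{\ell}{3\sqrt3}$ if $K=-1$; let $r_0>0$ be the largest zero of $f$ (simple; $f>0,f'>0$ on $(r_0,\infty)$). Let ${}^2g=f(r)dt^2+f(r)^{-1}dr^2$ on $\mathbb R^2$, with $r\in[r_0,\infty)$, $t$ periodic of period $4\pi/f'(r_0)$, $(r,t)$ polar-type coordinates centred at $r=r_0$ (a smooth complete metric); $\Delta_{{}^2g}=\nabla^a\nabla_a$ on functions. *)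

theory Defs
  imports "HOL-Analysis.Analysis"
begin

definition fBH :: "real \<Rightarrow> real \<Rightarrow> real \<Rightarrow> real \<Rightarrow> real" where
  "fBH ell K mu r = r^2 / ell^2 + K - 2 * mu / r"

definition VSk :: "real \<Rightarrow> real \<Rightarrow> real \<Rightarrow> real \<Rightarrow> real \<Rightarrow> real" where
  "VSk ell K mu k r = (let m = k^2 - 2 * K in
     (6 * mu / r^3 + m / r^2 + (2 * m^2 * (m + 3 * K) + 216 * mu^2 / ell^2) / (6 * mu + m * r)^2) / 3)"

definition tperiod :: "real \<Rightarrow> real \<Rightarrow> real \<Rightarrow> real \<Rightarrow> real" where
  "tperiod ell K mu r0 = 4 * pi / deriv (fBH ell K mu) r0"

text \<open>Proper radial distance from the centre r = r0 (rho = int_{r0}^r f^{-1/2}).\<close>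
definition rho_coord :: "real \<Rightarrow> real \<Rightarrow> real \<Rightarrow> real \<Rightarrow> real \<Rightarrow> real" where
  "rho_coord ell K mu r0 r = (LBINT s=r0..r. 1 / sqrt (fBH ell K mu s))"

text \<open>The global Cartesian chart of R^2 in which (r,t) are polar-type coordinates centred
  at r = r0: angle theta = 2 pi t / period, radius = proper distance rho(r).\<close>
definition polar_chart :: "real \<Rightarrow> real \<Rightarrow> real \<Rightarrow> real \<Rightarrow> real \<times> real \<Rightarrow> real \<times> real" where
  "polar_chart ell K mu r0 p =
     (let r = fst p; t = snd p; \<theta> = 2 * pi * t / tperiod ell K mu r0; \<rho> = rho_coord ell K mu r0 r
      in (\<rho> * cos \<theta>, \<rho> * sin \<theta>))"

definition C2_partials_on ::
  "(real \<times> real) set \<Rightarrow> (real \<times> real \<Rightarrow> real) \<Rightarrow> (real \<times> real \<Rightarrow> real) \<Rightarrow> (real \<times> real \<Rightarrow> real)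
   \<Rightarrow> (real \<times> real \<Rightarrow> real) \<Rightarrow> (real \<times> real \<Rightarrow> real) \<Rightarrow> (real \<times> real \<Rightarrow> real)
   \<Rightarrow> (real \<times> real \<Rightarrow> real) \<Rightarrow> bool" where
  "C2_partials_on S g g1 g2 g11 g12 g21 g22 \<longleftrightarrow>
     open S \<and>
     (\<forall>x y. (x, y) \<in> S \<longrightarrow>
        ((\<lambda>s. g (s, y)) has_real_derivative g1 (x, y)) (at x) \<and>
        ((\<lambda>s. g (x, s)) has_real_derivative g2 (x, y)) (at y) \<and>
        ((\<lambda>s. g1 (s, y)) has_real_derivative g11 (x, y)) (at x) \<and>
        ((\<lambda>s. g1 (x, s)) has_real_derivative g12 (x, y)) (at y) \<and>
        ((\<lambda>s. g2 (s, y)) has_real_derivative g21 (x, y)) (at x) \<and>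
        ((\<lambda>s. g2 (x, s)) has_real_derivative g22 (x, y)) (at y)) \<and>
     continuous_on S g \<and> continuous_on S g1 \<and> continuous_on S g2 \<and>
     continuous_on S g11 \<and> continuous_on S g12 \<and> continuous_on S g21 \<and> continuous_on S g22"

end

theory Submission
  imports Defs
begin


lemma fBH_deriv:
  assumes "r \<noteq> 0" "ell \<noteq> 0"
  shows "(fBH ell K mu has_real_derivative (2*r/ell^2 + 2*mu/r^2)) (at r)"
  unfolding fBH_def using assms
  by (auto intro!: derivative_eq_intros simp: power2_eq_square field_simps)

lemma fBH_factor:
  fixes r r0 :: real
  assumes "r > 0" "r0 > 0" "fBH ell K mu r0 = 0" "ell \<noteq> 0"
  shows "fBH ell K mu r = (r - r0) * ((r + r0)/ell^2 + 2*mu/(r*r0))"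
proof -
  have "fBH ell K mu r = fBH ell K mu r - fBH ell K mu r0" using assms by simp
  also have "\<dots> = (r - r0) * ((r + r0)/ell^2 + 2*mu/(r*r0))"
    unfolding fBH_def using assms(1,2,4) by (simp add: field_simps power2_eq_square)
  finally show ?thesis .
qed

locale bh =
  fixes ell mu K k r0 :: real
  assumes ell_pos: "ell > 0"
    and K_range: "K \<in> {-1, 0, 1}"
    and mu_cond: "(K \<in> {0, 1} \<longrightarrow> mu > 0) \<and> (K = -1 \<longrightarrow> mu > - ell / (3 * sqrt 3))"
    and r0_pos: "r0 > 0"
    and r0_zero: "fBH ell K mu r0 = 0"
    and r0_largest: "\<forall>r>r0. fBH ell K mu r > 0"
    and k_pos: "k > 0"
    and k_big: "k^2 > max 0 (2 * K)"

context bh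
begin

definition "bb r = (r + r0)/ell^2 + 2*mu/(r*r0)"

lemma bb_pos: "r > r0 \<Longrightarrow> bb r > 0"
proof -
  assume r: "r > r0"
  have "fBH ell K mu r = (r - r0) * bb r" using fBH_factor[of r r0] r r0_pos r0_zero bb_def ell_pos by auto
  moreover have "fBH ell K mu r > 0" using r r0_largest by auto
  ultimately show ?thesis using r by (simp add: zero_less_mult_iff)
qed

lemma bb_r0: "bb r0 = 2*r0/ell^2 + 2*mu/r0^2"
  unfolding bb_def by (simp add: power2_eq_square)

lemma fp0_nonneg: "2*r0/ell^2 + 2*mu/r0^2 \<ge> 0"
proof -
  have "isCont bb r0"
    unfolding bb_def using r0_pos ell_pos by (auto intro!: continuous_intros)
  then have "(bb \<longlongrightarrow> bb r0) (at_right r0)"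
    by (simp add: isCont_def filterlim_at_split)
  moreover have "eventually (\<lambda>r. 0 \<le> bb r) (at_right r0)"
    unfolding eventually_at_right_field using bb_pos less_imp_le
    by (intro exI[of _ "r0+1"]) auto
  ultimately have "0 \<le> bb r0"
    by (rule tendsto_lowerbound) simp
  then show ?thesis using bb_r0 by simp
qed

lemma mu_nonpos_K: "mu \<le> 0 \<Longrightarrow> K = -1"
  using mu_cond K_range by auto

lemma fp0_pos: "2*r0/ell^2 + 2*mu/r0^2 > 0"
proof (cases "mu > 0")
  case True
  then show ?thesis using r0_pos ell_pos by (simp add: add_pos_pos)
next
  case False
  then have K: "K = -1" using mu_nonpos_K by simp
  show ?thesis
  proof (rule ccontr)
    assume "\<not> ?thesis"
    then have eq: "2*r0/ell^2 + 2*mu/r0^2 = 0" using fp0_nonneg by simp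
    have mu: "mu = -(r0^3)/ell^2" using eq r0_pos ell_pos
      by (simp add: field_simps power2_eq_square power3_eq_cube)
    have "r0^2/ell^2 - 1 - 2*mu/r0 = 0" using r0_zero K unfolding fBH_def by simp
    then have "r0^2/ell^2 - 1 + 2*r0^2/ell^2 = 0" using mu r0_pos
      by (simp add: power2_eq_square power3_eq_cube)
    then have r02: "3 * r0^2 = ell^2" using ell_pos by (simp add: field_simps)
    have "(sqrt 3 * r0)^2 = ell^2" using r02 by (simp add: power_mult_distrib)
    then have s3: "sqrt 3 * r0 = ell" using r0_pos ell_pos
      by (metis power2_eq_imp_eq less_imp_le mult_nonneg_nonneg real_sqrt_ge_zero zero_le_numeral)
    have "mu = - r0 * r0^2 / ell^2" using mu by (simp add: power2_eq_square power3_eq_cube)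
    also have "\<dots> = - r0 / 3" using r02 ell_pos by (simp add: field_simps)
    also have "\<dots> = - ell / (3 * sqrt 3)" using s3 by (simp add: field_simps)
    finally show False using mu_cond K by simp
  qed
qed

definition "mm = k^2 - 2*K"

lemma mm_pos: "mm > 0"
  using k_big K_range unfolding mm_def by auto

lemma A_pos: "r \<ge> r0 \<Longrightarrow> 6*mu + mm*r > 0"
proof -
  assume r: "r \<ge> r0"
  have "mm * r0 \<le> mm * r" using r mm_pos by simp
  moreover have "6*mu + mm*r0 > 0"
  proof (cases "mu \<ge> 0")
    case True then show ?thesis using mm_pos r0_pos by (simp add: add_nonneg_pos)
  next
    case False
    then have K: "K = -1" using mu_nonpos_K by simp
    have "r0^2/ell^2 - 1 - 2*mu/r0 = 0" using r0_zero K unfolding fBH_def by simp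
    then have mu: "2*mu = r0^3/ell^2 - r0" using r0_pos
      by (simp add: field_simps power2_eq_square power3_eq_cube)
    have "2*r0/ell^2 + 2*mu/r0^2 \<ge> 0" by (rule fp0_nonneg)
    then have "2*r0^3/ell^2 + 2*mu \<ge> 0" using r0_pos
      by (simp add: field_simps power2_eq_square power3_eq_cube)
    then have h: "3*r0^3/ell^2 - r0 \<ge> 0" using mu by simp
    have "6*mu + mm*r0 = (3*r0^3/ell^2 - r0) + k^2*r0" using mu K unfolding mm_def
      by (simp add: algebra_simps)
    moreover have "k^2*r0 > 0" using k_pos r0_pos by simp
    ultimately show ?thesis using h by linarith
  qed
  ultimately show ?thesis by simp
qed

lemma f_lower: "\<exists>c>0. \<forall>s\<ge>r0. c * (s - r0) \<le> fBH ell K mu s"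
proof -
  obtain c where c: "c > 0" "\<forall>s\<ge>r0. c \<le> bb s"
  proof (cases "mu \<ge> 0")
    case True
    show ?thesis
    proof (rule that[of "2*r0/ell^2"])
      show "2*r0/ell^2 > 0" using r0_pos ell_pos by simp
      show "\<forall>s\<ge>r0. 2*r0/ell^2 \<le> bb s"
      proof (intro allI impI)
        fix s assume s: "s \<ge> r0"
        have "2*r0/ell^2 \<le> (s + r0)/ell^2" using s ell_pos by (simp add: divide_right_mono)
        moreover have "0 \<le> 2*mu/(s*r0)" using True s r0_pos by simp
        ultimately show "2*r0/ell^2 \<le> bb s" unfolding bb_def by simp
      qed
    qed
  next
    case False
    show ?thesis
    proof (rule that[of "bb r0"])
      show "bb r0 > 0" using fp0_pos bb_r0 by simp
      show "\<forall>s\<ge>r0. bb r0 \<le> bb s"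
      proof (intro allI impI)
        fix s assume s: "s \<ge> r0"
        have "bb s - bb r0 = (s - r0) * (1/ell^2 - 2*mu/(s*r0^2))"
          unfolding bb_def using s r0_pos ell_pos by (simp add: field_simps power2_eq_square)
        moreover have "1/ell^2 - 2*mu/(s*r0^2) \<ge> 0"
        proof -
          have "2*mu/(s*r0^2) \<le> 0" using False s r0_pos
            by (simp add: divide_nonpos_pos)
          then show ?thesis using ell_pos by (smt (verit) divide_pos_pos zero_less_power)
        qed
        moreover have "(s - r0) * (1/ell^2 - 2*mu/(s*r0^2)) \<ge> 0"
          using s \<open>1/ell^2 - 2*mu/(s*r0^2) \<ge> 0\<close> by (intro mult_nonneg_nonneg) auto
        ultimately show "bb r0 \<le> bb s" by linarith
      qed
    qed
  qed
  show ?thesis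
  proof (intro exI[of _ c] conjI allI impI)
    show "c > 0" by fact
    fix s assume s: "s \<ge> r0"
    have "fBH ell K mu s = (s - r0) * bb s" using fBH_factor[of s r0] s r0_pos r0_zero bb_def ell_pos by auto
    moreover have "c * (s - r0) \<le> bb s * (s - r0)" using c s by (simp add: mult_right_mono)
    ultimately show "c * (s - r0) \<le> fBH ell K mu s" by (simp add: mult.commute)
  qed
qed

lemma f_upper_near: "R \<ge> r0 \<Longrightarrow> \<exists>M>0. \<forall>s. r0 \<le> s \<and> s \<le> R \<longrightarrow> fBH ell K mu s \<le> M * (s - r0)"
proof -
  assume R: "R \<ge> r0"
  define M where "M = 2*R/ell^2 + 2*\<bar>mu\<bar>/r0^2 + 1"
  have M: "M > 0" unfolding M_def using R r0_pos ell_pos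
    by (smt (verit) divide_nonneg_pos zero_le_power abs_ge_zero zero_less_power)
  show ?thesis
  proof (intro exI[of _ M] conjI allI impI)
    show "M > 0" by fact
    fix s assume s: "r0 \<le> s \<and> s \<le> R"
    have "fBH ell K mu s = (s - r0) * bb s" using fBH_factor[of s r0] s r0_pos r0_zero bb_def ell_pos by auto
    moreover have "bb s \<le> M"
    proof -
      have "(s + r0)/ell^2 \<le> 2*R/ell^2" using s R ell_pos by (simp add: divide_right_mono)
      moreover have "2*mu/(s*r0) \<le> 2*\<bar>mu\<bar>/r0^2"
      proof -
        have "2*mu/(s*r0) \<le> 2*\<bar>mu\<bar>/(s*r0)" using s r0_pos by (simp add: divide_right_mono)
        also have "\<dots> \<le> 2*\<bar>mu\<bar>/(r0*r0)" using s r0_pos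
          by (intro divide_left_mono) (auto intro: mult_right_mono)
        finally show ?thesis by (simp add: power2_eq_square)
      qed
      ultimately show ?thesis unfolding bb_def M_def by simp
    qed
    moreover have "bb s * (s - r0) \<le> M * (s - r0)" using \<open>bb s \<le> M\<close> s by (simp add: mult_right_mono)
    ultimately show "fBH ell K mu s \<le> M * (s - r0)" by (simp add: mult.commute)
  qed
qed

lemma f_upper_far: "\<exists>C>0. \<forall>s. s \<ge> 1 \<and> s \<ge> r0 \<longrightarrow> fBH ell K mu s \<le> C * s^2"
proof -
  define C where "C = 1/ell^2 + 1 + 2*\<bar>mu\<bar>/r0"
  have C: "C > 0" unfolding C_def using r0_pos ell_pos
    by (smt (verit) divide_nonneg_pos zero_le_power abs_ge_zero zero_less_power)
  show ?thesis
  proof (intro exI[of _ C] conjI allI impI)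
    show "C > 0" by fact
    fix s assume s: "s \<ge> 1 \<and> s \<ge> r0"
    have s2: "s^2 \<ge> 1" using s by (simp add: one_le_power)
    have "K \<le> 1" using K_range by auto
    have "- 2*mu/s \<le> 2*\<bar>mu\<bar>/r0"
    proof -
      have "(- 2*mu)/s \<le> 2*\<bar>mu\<bar>/s" using s by (intro divide_right_mono) auto
      then have "- 2*mu/s \<le> 2*\<bar>mu\<bar>/s" by simp
      also have "\<dots> \<le> 2*\<bar>mu\<bar>/r0" using s r0_pos by (intro divide_left_mono) auto
      finally show ?thesis .
    qed
    then have "fBH ell K mu s \<le> s^2/ell^2 + 1 + 2*\<bar>mu\<bar>/r0"
      unfolding fBH_def using \<open>K \<le> 1\<close> by simp
    also have "\<dots> \<le> s^2/ell^2 + s^2 + (2*\<bar>mu\<bar>/r0) * s^2"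
    proof -
      have "2*\<bar>mu\<bar>/r0 * 1 \<le> 2*\<bar>mu\<bar>/r0 * s^2" using s2 r0_pos by (intro mult_left_mono) auto
      then show ?thesis using s2 by simp
    qed
    also have "\<dots> = C * s^2" unfolding C_def by (simp add: algebra_simps)
    finally show "fBH ell K mu s \<le> C * s^2" .
  qed
qed


definition "gg s = 1 / sqrt (fBH ell K mu s)"

lemma gg_meas: "gg \<in> borel_measurable (lebesgue_on S)"
proof -
  have "gg \<in> borel_measurable lborel"
    unfolding gg_def fBH_def by measurable
  then have "gg \<in> borel_measurable lebesgue"
    by (rule measurable_completion)
  then show ?thesis
    by (rule measurable_restrict_space1)
qed

lemma gg_nonneg: "s \<ge> r0 \<Longrightarrow> gg s \<ge> 0"
proof -
  assume s: "s \<ge> r0"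
  obtain c where c: "c > 0" "\<forall>s\<ge>r0. c * (s - r0) \<le> fBH ell K mu s" using f_lower by blast
  have "0 \<le> c * (s - r0)" using c s by simp
  then have "fBH ell K mu s \<ge> 0" using c(2) s order_trans by blast
  then show ?thesis unfolding gg_def by simp
qed

lemma h_integral:
  assumes c: "c > 0" and R: "R \<ge> r0"
  shows "((\<lambda>s. 1 / sqrt (c * (s - r0))) has_integral (2 * sqrt (R - r0) / sqrt c)) {r0..R}"
proof -
  have "((\<lambda>s. 1 / sqrt (c * (s - r0))) has_integral
        ((\<lambda>s. 2 * sqrt (s - r0) / sqrt c) R - (\<lambda>s. 2 * sqrt (s - r0) / sqrt c) r0)) {r0..R}"
  proof (rule fundamental_theorem_of_calculus_interior_strong[of "{}"])
    show "finite {}" by simp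
    show "r0 \<le> R" by fact
    show "continuous_on {r0..R} (\<lambda>s. 2 * sqrt (s - r0) / sqrt c)"
      using c by (intro continuous_intros) auto
    fix x assume x: "x \<in> {r0<..<R} - {}"
    then have xp: "x - r0 > 0" by auto
    have d1: "((\<lambda>s. sqrt (s - r0)) has_real_derivative (inverse (sqrt (x - r0)) / 2)) (at x)"
    proof -
      have "((\<lambda>s. s - r0) has_real_derivative 1) (at x)"
        by (auto intro!: derivative_eq_intros)
      from DERIV_chain2[OF DERIV_real_sqrt[OF xp] this] show ?thesis by simp
    qed
    have "((\<lambda>s. sqrt (s - r0) * (2 / sqrt c)) has_real_derivative
           (inverse (sqrt (x - r0)) / 2 * (2 / sqrt c))) (at x)"
      by (rule DERIV_cmult_right[OF d1])
    moreover have "inverse (sqrt (x - r0)) / 2 * (2 / sqrt c) = 1 / sqrt (c * (x - r0))"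
      unfolding real_sqrt_mult using c xp by (simp add: field_simps)
    moreover have "(\<lambda>s. sqrt (s - r0) * (2 / sqrt c)) = (\<lambda>s. 2 * sqrt (s - r0) / sqrt c)" by auto
    ultimately show "((\<lambda>s. 2 * sqrt (s - r0) / sqrt c) has_vector_derivative 1 / sqrt (c * (x - r0))) (at x)"
      by (simp add: has_real_derivative_iff_has_vector_derivative)
  qed
  then show ?thesis by simp
qed

lemma gg_le_h:
  assumes c: "c > 0" "\<forall>s\<ge>r0. c * (s - r0) \<le> fBH ell K mu s" and s: "s \<ge> r0"
  shows "gg s \<le> 1 / sqrt (c * (s - r0))"
proof (cases "s = r0")
  case True
  then show ?thesis using r0_zero unfolding gg_def by simp
next
  case False
  then have sp: "c * (s - r0) > 0" using s c by simp
  then have "sqrt (c * (s - r0)) \<le> sqrt (fBH ell K mu s)" using c s by simp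
  moreover have "sqrt (c * (s - r0)) > 0" using sp by simp
  ultimately show ?thesis unfolding gg_def by (simp add: frac_le)
qed

lemma gg_integrable: "R \<ge> r0 \<Longrightarrow> gg integrable_on {r0..R}"
proof -
  assume R: "R \<ge> r0"
  obtain c where c: "c > 0" "\<forall>s\<ge>r0. c * (s - r0) \<le> fBH ell K mu s" using f_lower by blast
  show ?thesis
  proof (rule measurable_bounded_by_integrable_imp_integrable_real)
    show "gg \<in> borel_measurable (lebesgue_on {r0..R})" by (rule gg_meas)
    show "(\<lambda>s. 1 / sqrt (c * (s - r0))) integrable_on {r0..R}"
      using h_integral[OF c(1) R] by blast
    show "\<bar>gg x\<bar> \<le> 1 / sqrt (c * (x - r0))" if "x \<in> {r0..R}" for x
      using gg_le_h[OF c, of x] gg_nonneg[of x] that by simp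
    show "{r0..R} \<in> sets lebesgue" by simp
  qed
qed

lemma rho_eq: "r \<ge> r0 \<Longrightarrow> rho_coord ell K mu r0 r = integral {r0..r} gg"
proof -
  assume r: "r \<ge> r0"
  have ai: "gg absolutely_integrable_on {r0..r}"
    using gg_integrable[OF r] gg_nonneg by (intro nonnegative_absolutely_integrable_1) auto
  then have "integrable lebesgue (\<lambda>x. indicator {r0..r} x *\<^sub>R gg x)"
    by (simp add: set_integrable_def)
  moreover have "(\<lambda>x. indicator {r0..r} x *\<^sub>R gg x) \<in> lborel \<rightarrow>\<^sub>M borel"
    unfolding gg_def fBH_def by measurable
  ultimately have "integrable lborel (\<lambda>x. indicator {r0..r} x *\<^sub>R gg x)"
    using integrable_completion by blast
  then have si: "set_integrable lborel {r0..r} gg" by (simp add: set_integrable_def)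
  have "rho_coord ell K mu r0 r = (LBINT s:{r0..r}. gg s)"
    unfolding rho_coord_def gg_def[abs_def] using r by (rule interval_integral_Icc)
  also have "\<dots> = integral {r0..r} gg" by (rule set_borel_integral_eq_integral(2)[OF si])
  finally show ?thesis .
qed

lemma rho_cont: "R \<ge> r0 \<Longrightarrow> continuous_on {r0..R} (rho_coord ell K mu r0)"
proof -
  assume R: "R \<ge> r0"
  have "continuous_on {r0..R} (\<lambda>x. integral {r0..x} gg)"
    by (rule indefinite_integral_continuous_1[OF gg_integrable[OF R]])
  then show ?thesis by (rule continuous_on_eq) (simp add: rho_eq)
qed

lemma rho_small: "\<exists>c>0. \<forall>r\<ge>r0. 0 \<le> rho_coord ell K mu r0 r \<and> rho_coord ell K mu r0 r \<le> 2 * sqrt (r - r0) / sqrt c"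
proof -
  obtain c where c: "c > 0" "\<forall>s\<ge>r0. c * (s - r0) \<le> fBH ell K mu s" using f_lower by blast
  show ?thesis
  proof (intro exI[of _ c] conjI allI impI)
    fix r assume r: "r \<ge> r0"
    have "integral {r0..r} gg \<le> integral {r0..r} (\<lambda>s. 1 / sqrt (c * (s - r0)))"
      using gg_integrable[OF r] h_integral[OF c(1) r] gg_le_h[OF c]
      by (intro integral_le) auto
    also have "\<dots> = 2 * sqrt (r - r0) / sqrt c" using h_integral[OF c(1) r] by (rule integral_unique)
    finally show "rho_coord ell K mu r0 r \<le> 2 * sqrt (r - r0) / sqrt c" using rho_eq[OF r] by simp
    have "0 \<le> integral {r0..r} gg"
      using gg_integrable[OF r] gg_nonneg by (intro integral_nonneg) auto
    then show "0 \<le> rho_coord ell K mu r0 r" using rho_eq[OF r] by simp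
  qed (use c in auto)
qed

lemma rho_large: "\<exists>a C. a > r0 \<and> a \<ge> 1 \<and> C > 0 \<and> (\<forall>r\<ge>a. rho_coord ell K mu r0 r \<ge> (ln r - ln a) / sqrt C)"
proof -
  obtain C where C: "C > 0" "\<forall>s. s \<ge> 1 \<and> s \<ge> r0 \<longrightarrow> fBH ell K mu s \<le> C * s^2"
    using f_upper_far by blast
  define a where "a = max 1 r0 + 1"
  have a: "a > r0" "a \<ge> 1" unfolding a_def by auto
  show ?thesis
  proof (rule exI[of _ a], rule exI[of _ C], intro conjI allI impI)
    fix r assume r: "r \<ge> a"
    have rr0: "r \<ge> r0" using r a by simp
    have lo: "1 / (sqrt C * s) \<le> gg s" if s: "s \<in> {a..r}" for s
    proof -
      have sp: "s > r0" "s \<ge> 1" using s a by auto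
      have fpos: "fBH ell K mu s > 0" using r0_largest sp by auto
      have "sqrt (fBH ell K mu s) \<le> sqrt (C * s^2)" using C sp by simp
      also have "\<dots> = sqrt C * s" using sp by (simp add: real_sqrt_mult)
      finally show ?thesis unfolding gg_def using fpos by (simp add: frac_le)
    qed
    have ln_int: "((\<lambda>s. 1 / (sqrt C * s)) has_integral (ln r / sqrt C - ln a / sqrt C)) {a..r}"
    proof (rule fundamental_theorem_of_calculus)
      show "a \<le> r" by fact
      fix x assume x: "x \<in> {a..r}"
      then have xp: "x > 0" using a by auto
      have "((\<lambda>s. ln s * (1 / sqrt C)) has_real_derivative (1 / x * (1 / sqrt C))) (at x)"
        by (rule DERIV_cmult_right[OF DERIV_ln_divide[OF xp]])
      then have "((\<lambda>s. ln s / sqrt C) has_real_derivative (1 / x * (1 / sqrt C))) (at x within {a..r})"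
        by (auto intro: has_field_derivative_at_within)
      moreover have "1 / x * (1 / sqrt C) = 1 / (sqrt C * x)" by (simp add: mult.commute)
      ultimately show "((\<lambda>s. ln s / sqrt C) has_vector_derivative 1 / (sqrt C * x)) (at x within {a..r})"
        by (simp only: has_real_derivative_iff_has_vector_derivative)
    qed
    have gi: "gg integrable_on {a..r}"
      by (rule integrable_on_subinterval[OF gg_integrable[OF rr0]]) (use a in auto)
    have "(ln r - ln a) / sqrt C = integral {a..r} (\<lambda>s. 1 / (sqrt C * s))"
      using integral_unique[OF ln_int] by (simp add: diff_divide_distrib)
    also have "\<dots> \<le> integral {a..r} gg"
      using ln_int gi lo by (intro integral_le) auto
    also have "\<dots> \<le> integral {r0..r} gg"
      using gg_integrable[OF rr0] a gg_nonneg gi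
      by (intro integral_subset_le) auto
    finally have "(ln r - ln a) / sqrt C \<le> integral {r0..r} gg" .
    then show "rho_coord ell K mu r0 r \<ge> (ln r - ln a) / sqrt C" using rho_eq[OF rr0] by simp
  qed (use a C in auto)
qed

lemma rho_surj: "\<rho> > 0 \<Longrightarrow> \<exists>r>r0. rho_coord ell K mu r0 r = \<rho>"
proof -
  assume rp: "\<rho> > 0"
  obtain a C where aC: "a > r0" "a \<ge> 1" "C > 0" "\<forall>r\<ge>a. rho_coord ell K mu r0 r \<ge> (ln r - ln a) / sqrt C"
    using rho_large by blast
  define r1 where "r1 = a * exp (\<rho> * sqrt C)"
  have "exp (\<rho> * sqrt C) \<ge> 1" using rp aC by simp
  then have r1a: "r1 \<ge> a" unfolding r1_def using aC by simp
  have "ln r1 - ln a = \<rho> * sqrt C" unfolding r1_def using aC by (simp add: ln_mult)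
  then have "(ln r1 - ln a) / sqrt C = \<rho>" using aC by simp
  then have big: "rho_coord ell K mu r0 r1 \<ge> \<rho>" using aC(4) r1a by metis
  have z: "rho_coord ell K mu r0 r0 = 0" using rho_eq[of r0] by simp
  obtain x where x: "r0 \<le> x" "x \<le> r1" "rho_coord ell K mu r0 x = \<rho>"
    using IVT'[of "rho_coord ell K mu r0" r0 \<rho> r1] z big rp r1a aC rho_cont[of r1] by force
  then have "x \<noteq> r0" using z rp by auto
  then show ?thesis using x by (intro exI[of _ x]) auto
qed


lemma deriv_r0: "deriv (fBH ell K mu) r0 = 2*r0/ell^2 + 2*mu/r0^2"
  using fBH_deriv[of r0 ell K mu] r0_pos ell_pos by (intro DERIV_imp_deriv) auto

lemma T_pos: "tperiod ell K mu r0 > 0"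
  unfolding tperiod_def deriv_r0 using fp0_pos by simp

lemma chart_periodic:
  "polar_chart ell K mu r0 (r, t + tperiod ell K mu r0) = polar_chart ell K mu r0 (r, t)"
proof -
  define T where "T = tperiod ell K mu r0"
  have T: "T > 0" using T_pos T_def by simp
  have "2 * pi * (t + T) / T = 2 * pi * t / T + 2 * pi" using T by (simp add: field_simps)
  then show ?thesis unfolding polar_chart_def Let_def T_def[symmetric]
    by (simp add: cos_periodic sin_periodic)
qed

lemma norm_chart: "norm (polar_chart ell K mu r0 (r, t)) = \<bar>rho_coord ell K mu r0 r\<bar>"
proof -
  define th where "th = 2 * pi * t / tperiod ell K mu r0"
  define p where "p = rho_coord ell K mu r0 r"
  have "norm (polar_chart ell K mu r0 (r, t)) = sqrt ((p * cos th)^2 + (p * sin th)^2)"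
    unfolding polar_chart_def Let_def norm_Pair th_def p_def by simp
  also have "(p * cos th)^2 + (p * sin th)^2 = p^2"
    by (simp add: power_mult_distrib flip: distrib_left)
  finally show ?thesis unfolding p_def by simp
qed

lemma chart_surj:
  assumes x: "x \<noteq> 0"
  shows "\<exists>r t. r > r0 \<and> 0 \<le> t \<and> t \<le> tperiod ell K mu r0 \<and> polar_chart ell K mu r0 (r, t) = x"
proof -
  obtain x1 x2 where xx: "x = (x1, x2)" by (cases x)
  define \<rho> where "\<rho> = sqrt (x1^2 + x2^2)"
  have "x1^2 + x2^2 > 0" using x unfolding xx zero_prod_def by (auto simp: sum_power2_gt_zero_iff)
  then have rp: "\<rho> > 0" unfolding \<rho>_def by simp
  have "(x1/\<rho>)^2 + (x2/\<rho>)^2 = 1"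
    using rp \<open>x1^2 + x2^2 > 0\<close> unfolding \<rho>_def by (simp add: power_divide add_divide_distrib[symmetric] sum_power2_gt_zero_iff)
  then obtain \<theta> where th: "0 \<le> \<theta>" "\<theta> < 2*pi" "x1/\<rho> = cos \<theta>" "x2/\<rho> = sin \<theta>"
    using sincos_total_2pi by blast
  obtain r where r: "r > r0" "rho_coord ell K mu r0 r = \<rho>" using rho_surj[OF rp] by blast
  define T where "T = tperiod ell K mu r0"
  have T: "T > 0" using T_pos T_def by simp
  define t where "t = \<theta> * T / (2*pi)"
  have "2 * pi * t / T = \<theta>" unfolding t_def using T by simp
  then have "polar_chart ell K mu r0 (r, t) = (\<rho> * cos \<theta>, \<rho> * sin \<theta>)"
    unfolding polar_chart_def Let_def T_def[symmetric] using r by simp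
  also have "\<dots> = x" using th rp xx by (simp add: field_simps)
  finally have "polar_chart ell K mu r0 (r, t) = x" .
  moreover have "0 \<le> t" "t \<le> T" unfolding t_def using th T by (auto simp: field_simps)
  ultimately show ?thesis using r T_def by blast
qed

lemma U_bounded:
  fixes u :: "real \<times> real \<Rightarrow> real"
  assumes u_cont: "continuous_on UNIV u" and r2: "r2 > r0"
  shows "\<exists>B. \<forall>r t. r0 < r \<and> r \<le> r2 \<longrightarrow> \<bar>u (polar_chart ell K mu r0 (r, t))\<bar> \<le> B"
proof -
  obtain c where c: "c > 0" "\<forall>r\<ge>r0. 0 \<le> rho_coord ell K mu r0 r \<and> rho_coord ell K mu r0 r \<le> 2 * sqrt (r - r0) / sqrt c"
    using rho_small by blast
  define R where "R = 2 * sqrt (r2 - r0) / sqrt c"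
  have "compact (u ` cball 0 R)"
    by (rule compact_continuous_image[OF continuous_on_subset[OF u_cont] compact_cball]) auto
  then obtain B where B: "\<forall>y\<in>u ` cball 0 R. norm y \<le> B"
    using compact_imp_bounded bounded_iff by metis
  show ?thesis
  proof (intro exI[of _ B] allI impI)
    fix r t assume rt: "r0 < r \<and> r \<le> r2"
    have "rho_coord ell K mu r0 r \<le> 2 * sqrt (r - r0) / sqrt c" "0 \<le> rho_coord ell K mu r0 r"
      using c rt by auto
    moreover have "2 * sqrt (r - r0) / sqrt c \<le> R"
      unfolding R_def using rt c by (simp add: divide_right_mono)
    ultimately have "polar_chart ell K mu r0 (r, t) \<in> cball 0 R"
      using norm_chart[of r t] by simp
    then show "\<bar>u (polar_chart ell K mu r0 (r, t))\<bar> \<le> B" using B by auto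
  qed
qed

end



lemma key_pointwise:
  fixes f fp psi psi' Q V U Ur Urr Utt :: real
  assumes f: "f > 0" and V: "V = fp*psi + f*psi' + f*psi^2 + Q"
    and eq: "- (fp*Ur + f*Urr + Utt/f) + V*U = 0"
  shows "fp*(U*Ur - psi*U^2) + f*(Ur*Ur + U*Urr - psi'*U^2 - psi*(2*U*Ur)) = f*(Ur - psi*U)^2 + Q*U^2 - U*Utt/f"
proof -
  have e: "f*Urr = V*U - Utt/f - fp*Ur" using eq by linarith
  have "fp*(U*Ur - psi*U^2) + f*(Ur*Ur + U*Urr - psi'*U^2 - psi*(2*U*Ur))
      = fp*(U*Ur - psi*U^2) + f*(Ur*Ur - psi'*U^2 - psi*(2*U*Ur)) + U*(f*Urr)" by (simp add: algebra_simps)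
  also have "\<dots> = fp*(U*Ur - psi*U^2) + f*(Ur*Ur - psi'*U^2 - psi*(2*U*Ur)) + U*(V*U - Utt/f - fp*Ur)" by (simp only: e)
  also have "\<dots> = f*(Ur - psi*U)^2 + Q*U^2 - U*Utt/f" unfolding V by (simp add: algebra_simps power2_eq_square)
  finally show ?thesis .
qed

lemma V_ident:
  fixes ell K mu k r :: real
  defines "m \<equiv> k^2 - 2*K"
  defines "A \<equiv> 6*mu + m*r"
  assumes r: "r > 0" and A: "A \<noteq> 0" and l: "ell > 0"
  shows "VSk ell K mu k r = (2*r/ell^2 + 2*mu/r^2) * (6*mu/(r*A)) + fBH ell K mu r * (-6*mu*(A+m*r)/(r*A)^2)
     + fBH ell K mu r * (6*mu/(r*A))^2 + k^2*m/(r*A)"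
proof -
  have A': "6*mu + (k^2 - 2*K)*r \<noteq> 0" using A unfolding A_def m_def .
  show ?thesis
  unfolding VSk_def fBH_def Let_def
  using r A' l unfolding A_def m_def
  apply (simp add: divide_simps)
  apply algebra
  done
qed

context bh
begin

lemma U_vanish:
  fixes U Ur Ut Urr Urt Utr Utt :: "real \<times> real \<Rightarrow> real"
  assumes per: "\<And>r t. U (r, t + tperiod ell K mu r0) = U (r, t)"
    and C2: "C2_partials_on ({r0<..} \<times> UNIV) U Ur Ut Urr Urt Utr Utt"
    and eq: "\<And>r t. r > r0 \<Longrightarrow> - ((2*r/ell^2 + 2*mu/r^2) * Ur (r, t) + fBH ell K mu r * Urr (r, t)
           + Utt (r, t) / fBH ell K mu r) + VSk ell K mu k r * U (r, t) = 0"
    and L2: "(\<lambda>p. (U p)^2) integrable_on ({r0<..} \<times> {0..tperiod ell K mu r0})"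
    and bnd: "\<And>r2. r2 > r0 \<Longrightarrow> \<exists>B. \<forall>r t. r0 < r \<and> r \<le> r2 \<longrightarrow> \<bar>U (r, t)\<bar> \<le> B"
  shows "\<forall>r t. r > r0 \<and> 0 \<le> t \<and> t \<le> tperiod ell K mu r0 \<longrightarrow> U (r, t) = 0"
proof -
  define T where "T = tperiod ell K mu r0"
  have T: "T > 0" using T_pos T_def by simp
  define f where "f = fBH ell K mu"
  define fp where "fp r = 2*r/ell^2 + 2*mu/r^2" for r
  define A where "A r = 6*mu + mm*r" for r
  define psi where "psi r = 6*mu/(r*A r)" for r
  define dpsi where "dpsi r = -6*mu*(A r + mm*r)/(r*A r)^2" for r
  define Q where "Q r = k^2*mm/(r*A r)" for r
  define Om :: "real set" where "Om = {r0<..}"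
  define S where "S = Om \<times> {0..T}"
  have per': "\<And>r t. U (r, t + T) = U (r, t)" using per T_def by simp
  have C2': "open ({r0<..} \<times> (UNIV::real set))" by (simp add: open_Times)
  note C2u = C2[unfolded C2_partials_on_def]
  have dUr: "\<And>x y. x > r0 \<Longrightarrow> ((\<lambda>s. U (s, y)) has_real_derivative Ur (x, y)) (at x)"
   and dUt: "\<And>x y. x > r0 \<Longrightarrow> ((\<lambda>s. U (x, s)) has_real_derivative Ut (x, y)) (at y)"
   and dUrr: "\<And>x y. x > r0 \<Longrightarrow> ((\<lambda>s. Ur (s, y)) has_real_derivative Urr (x, y)) (at x)"
   and dUtt: "\<And>x y. x > r0 \<Longrightarrow> ((\<lambda>s. Ut (x, s)) has_real_derivative Utt (x, y)) (at y)"
    using C2u by auto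
  have cU: "continuous_on ({r0<..} \<times> UNIV) U" and cUr: "continuous_on ({r0<..} \<times> UNIV) Ur"
   and cUt: "continuous_on ({r0<..} \<times> UNIV) Ut" and cUrr: "continuous_on ({r0<..} \<times> UNIV) Urr"
   and cUtt: "continuous_on ({r0<..} \<times> UNIV) Utt"
    using C2u by auto
  have SS: "S \<subseteq> {r0<..} \<times> UNIV" unfolding S_def Om_def by auto
  have fpos: "\<And>r. r > r0 \<Longrightarrow> f r > 0" using r0_largest f_def by simp
  have Apos: "\<And>r. r \<ge> r0 \<Longrightarrow> A r > 0" using A_pos A_def by simp
  have Ane: "\<And>r. r > r0 \<Longrightarrow> 6*mu + mm*r \<noteq> 0" using A_pos by (metis less_imp_le less_irrefl)
  have rpos: "\<And>r. r \<ge> r0 \<Longrightarrow> r > 0" using r0_pos by linarith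
  have slice: "\<And>(h::real\<times>real\<Rightarrow>real) r. continuous_on ({r0<..} \<times> UNIV) h \<Longrightarrow> r > r0 \<Longrightarrow> continuous_on {0..T} (\<lambda>t. h (r, t))"
  proof -
    fix h :: "real\<times>real\<Rightarrow>real" and r :: real assume h: "continuous_on ({r0<..} \<times> UNIV) h" and r: "r > r0"
    show "continuous_on {0..T} (\<lambda>t. h (r, t))"
      by (rule continuous_on_compose2[OF h, of _ "\<lambda>t. (r, t)"]) (use r in \<open>auto intro!: continuous_intros\<close>)
  qed
  have cS: "\<And>(h::real\<times>real\<Rightarrow>real). continuous_on ({r0<..} \<times> UNIV) h \<Longrightarrow> continuous_on S h"
    using SS continuous_on_subset by blast
  have cfst: "\<And>(h::real\<Rightarrow>real). continuous_on Om h \<Longrightarrow> continuous_on S (\<lambda>p. h (fst p))"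
    by (rule continuous_on_compose2[OF _ continuous_on_fst]) (auto simp: S_def)
  have cf: "continuous_on Om f"
    unfolding f_def fBH_def Om_def using rpos ell_pos r0_pos by (auto intro!: continuous_intros)
  have cfp: "continuous_on Om fp"
    unfolding fp_def Om_def using rpos ell_pos r0_pos by (auto intro!: continuous_intros)
  have cpsi: "continuous_on Om psi"
    unfolding psi_def Om_def using rpos Ane r0_pos unfolding A_def
    by (auto intro!: continuous_intros)
  have cdpsi: "continuous_on Om dpsi"
    unfolding dpsi_def Om_def using rpos Ane r0_pos unfolding A_def
    by (auto intro!: continuous_intros)
  have df: "\<And>r. r > r0 \<Longrightarrow> (f has_real_derivative fp r) (at r)"
    unfolding f_def fp_def using fBH_deriv rpos ell_pos by (metis less_imp_le less_irrefl)
  have dpsi_d: "\<And>r. r > r0 \<Longrightarrow> (psi has_real_derivative dpsi r) (at r)"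
  proof -
    fix r assume r: "r > r0"
    have r0': "r \<noteq> 0" using rpos r by (metis less_imp_le less_irrefl)
    have a0: "6*mu + mm*r \<noteq> 0" using Ane r by simp
    have dg: "((\<lambda>r. r*(6*mu+mm*r)) has_real_derivative ((6*mu + mm*r) + r*mm)) (at r)"
      by (auto intro!: derivative_eq_intros)
    have g0: "r*(6*mu+mm*r) \<noteq> 0" using r0' a0 by simp
    have "((\<lambda>r. 6*mu / (r*(6*mu+mm*r))) has_real_derivative
           ((0 * (r*(6*mu+mm*r)) - 6*mu * ((6*mu + mm*r) + r*mm)) / ((r*(6*mu+mm*r)) * (r*(6*mu+mm*r))))) (at r)"
      by (rule DERIV_divide[OF DERIV_const dg g0])
    moreover have "(0 * (r*(6*mu+mm*r)) - 6*mu * ((6*mu + mm*r) + r*mm)) / ((r*(6*mu+mm*r)) * (r*(6*mu+mm*r))) = dpsi r"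
      unfolding dpsi_def A_def by (simp add: power2_eq_square)
    ultimately show "(psi has_real_derivative dpsi r) (at r)"
      unfolding psi_def[abs_def] A_def by simp
  qed
  define E where "E r = integral {0..T} (\<lambda>t. (U (r, t))^2)" for r
  define D where "D r = integral {0..T} (\<lambda>t. U (r, t) * Ur (r, t))" for r
  define D2 where "D2 r = integral {0..T} (\<lambda>t. Ur (r, t) * Ur (r, t) + U (r, t) * Urr (r, t))" for r
  define I2 where "I2 r = integral {0..T} (\<lambda>t. (Ut (r, t))^2)" for r
  have hE: "\<And>r. r > r0 \<Longrightarrow> ((\<lambda>t. (U (r, t))^2) has_integral E r) {0..T}"
    unfolding E_def by (rule integrable_integral, rule integrable_continuous_interval)
      (auto intro!: continuous_intros slice[OF cU])
  have hD: "\<And>r. r > r0 \<Longrightarrow> ((\<lambda>t. U (r, t) * Ur (r, t)) has_integral D r) {0..T}"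
    unfolding D_def by (rule integrable_integral, rule integrable_continuous_interval)
      (auto intro!: continuous_intros slice[OF cU] slice[OF cUr])
  have hD2: "\<And>r. r > r0 \<Longrightarrow> ((\<lambda>t. Ur (r, t) * Ur (r, t) + U (r, t) * Urr (r, t)) has_integral D2 r) {0..T}"
    unfolding D2_def by (rule integrable_integral, rule integrable_continuous_interval)
      (auto intro!: continuous_intros slice[OF cU] slice[OF cUr] slice[OF cUrr])
  have hI2: "\<And>r. r > r0 \<Longrightarrow> ((\<lambda>t. (Ut (r, t))^2) has_integral I2 r) {0..T}"
    unfolding I2_def by (rule integrable_integral, rule integrable_continuous_interval)
      (auto intro!: continuous_intros slice[OF cUt])
  have I2_nonneg: "\<And>r. r > r0 \<Longrightarrow> I2 r \<ge> 0"
    using hI2 by (rule has_integral_nonneg) auto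
  have E_nonneg: "\<And>r. r > r0 \<Longrightarrow> E r \<ge> 0"
    using hE by (rule has_integral_nonneg) auto
  have convOm: "convex Om" unfolding Om_def by simp
  have openOm: "open Om" unfolding Om_def by simp
  have contS_pair: "\<And>(h::real\<times>real\<Rightarrow>real). continuous_on S h \<Longrightarrow> continuous_on (Om \<times> cbox 0 T) (\<lambda>(x, t). h (x, t))"
    by (simp add: S_def cbox_interval)
  have dE: "\<And>r. r > r0 \<Longrightarrow> (E has_real_derivative 2 * D r) (at r)"
  proof -
    fix r assume r: "r > r0"
    have "((\<lambda>x. integral (cbox 0 T) (\<lambda>t. (U (x, t))^2)) has_field_derivative
            integral (cbox 0 T) (\<lambda>t. 2 * (U (r, t) * Ur (r, t)))) (at r within Om)"
    proof (rule leibniz_rule_field_derivative[where fx = "\<lambda>x t. 2 * (U (x, t) * Ur (x, t))"])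
      fix x t assume x: "x \<in> Om" and t: "t \<in> cbox 0 T"
      have xr: "x > r0" using x Om_def by simp
      have "((\<lambda>s. U (s, t) * U (s, t)) has_real_derivative (Ur (x, t) * U (x, t) + Ur (x, t) * U (x, t))) (at x)"
        by (rule DERIV_mult[OF dUr[OF xr] dUr[OF xr]])
      then show "((\<lambda>x. (U (x, t))^2) has_field_derivative 2 * (U (x, t) * Ur (x, t))) (at x within Om)"
        by (auto simp: power2_eq_square algebra_simps intro: has_field_derivative_at_within)
    next
      fix x assume x: "x \<in> Om"
      then show "(\<lambda>t. (U (x, t))^2) integrable_on cbox 0 T"
        unfolding cbox_interval using hE Om_def by auto
    next
      show "continuous_on (Om \<times> cbox 0 T) (\<lambda>(x, t). 2 * (U (x, t) * Ur (x, t)))"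
        using contS_pair[of "\<lambda>p. 2 * (U p * Ur p)"] cS[OF cU] cS[OF cUr]
        by (simp add: continuous_on_mult continuous_on_const)
    qed (use r Om_def convOm in auto)
    moreover have "integral (cbox 0 T) (\<lambda>t. 2 * (U (r, t) * Ur (r, t))) = 2 * D r"
      unfolding D_def cbox_interval by simp
    ultimately show "(E has_real_derivative 2 * D r) (at r)"
      unfolding E_def[abs_def] cbox_interval using at_within_open[of r Om] r Om_def openOm by simp
  qed
  have dD: "\<And>r. r > r0 \<Longrightarrow> (D has_real_derivative D2 r) (at r)"
  proof -
    fix r assume r: "r > r0"
    have "((\<lambda>x. integral (cbox 0 T) (\<lambda>t. U (x, t) * Ur (x, t))) has_field_derivative
            integral (cbox 0 T) (\<lambda>t. Ur (r, t) * Ur (r, t) + U (r, t) * Urr (r, t))) (at r within Om)"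
    proof (rule leibniz_rule_field_derivative[where fx = "\<lambda>x t. Ur (x, t) * Ur (x, t) + U (x, t) * Urr (x, t)"])
      fix x t assume x: "x \<in> Om" and t: "t \<in> cbox 0 T"
      have xr: "x > r0" using x Om_def by simp
      have "((\<lambda>s. U (s, t) * Ur (s, t)) has_real_derivative (Ur (x, t) * Ur (x, t) + Urr (x, t) * U (x, t))) (at x)"
        by (rule DERIV_mult[OF dUr[OF xr] dUrr[OF xr]])
      then have "((\<lambda>s. U (s, t) * Ur (s, t)) has_real_derivative (Ur (x, t) * Ur (x, t) + U (x, t) * Urr (x, t))) (at x)"
        by (simp add: mult.commute)
      then show "((\<lambda>x. U (x, t) * Ur (x, t)) has_field_derivative Ur (x, t) * Ur (x, t) + U (x, t) * Urr (x, t)) (at x within Om)"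
        by (auto intro: has_field_derivative_at_within)
    next
      fix x assume x: "x \<in> Om"
      then show "(\<lambda>t. U (x, t) * Ur (x, t)) integrable_on cbox 0 T"
        unfolding cbox_interval using hD Om_def by auto
    next
      show "continuous_on (Om \<times> cbox 0 T) (\<lambda>(x, t). Ur (x, t) * Ur (x, t) + U (x, t) * Urr (x, t))"
        using contS_pair[of "\<lambda>p. Ur p * Ur p + U p * Urr p"] cS[OF cU] cS[OF cUr] cS[OF cUrr]
        by (simp add: continuous_on_mult continuous_on_add)
    qed (use r Om_def convOm in auto)
    then show "(D has_real_derivative D2 r) (at r)"
      unfolding D_def[abs_def] D2_def cbox_interval using at_within_open[of r Om] r Om_def openOm by simp
  qed
  have hUUtt: "\<And>r. r > r0 \<Longrightarrow> ((\<lambda>t. U (r, t) * Utt (r, t)) has_integral - I2 r) {0..T}"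
  proof -
    fix r assume r: "r > r0"
    have perUt: "Ut (r, T) = Ut (r, 0)"
    proof -
      have "((\<lambda>s. U (r, s)) has_real_derivative Ut (r, T)) (at (0 + T))" using dUt[OF r] by simp
      then have "((\<lambda>s. U (r, s + T)) has_real_derivative Ut (r, T)) (at 0)" by (rule iffD1[OF DERIV_shift])
      then have "((\<lambda>s. U (r, s)) has_real_derivative Ut (r, T)) (at 0)" using per' by simp
      then show ?thesis using dUt[OF r, of 0] DERIV_unique by blast
    qed
    have ftc: "((\<lambda>t. Ut (r, t) * Ut (r, t) + Utt (r, t) * U (r, t)) has_integral
               (U (r, T) * Ut (r, T) - U (r, 0) * Ut (r, 0))) {0..T}"
    proof (rule fundamental_theorem_of_calculus)
      show "0 \<le> T" using T by simp
      fix x assume x: "x \<in> {0..T}"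
      have "((\<lambda>s. U (r, s) * Ut (r, s)) has_real_derivative Ut (r, x) * Ut (r, x) + Utt (r, x) * U (r, x)) (at x)"
        by (rule DERIV_mult[OF dUt[OF r] dUtt[OF r]])
      then show "((\<lambda>s. U (r, s) * Ut (r, s)) has_vector_derivative Ut (r, x) * Ut (r, x) + Utt (r, x) * U (r, x)) (at x within {0..T})"
        by (simp add: has_real_derivative_iff_has_vector_derivative[symmetric] has_field_derivative_at_within)
    qed
    have "U (r, T) * Ut (r, T) - U (r, 0) * Ut (r, 0) = 0" using per'[of r 0] perUt by simp
    then have "((\<lambda>t. (Ut (r, t) * Ut (r, t) + Utt (r, t) * U (r, t)) - (Ut (r, t))^2) has_integral (0 - I2 r)) {0..T}"
      using has_integral_diff[OF ftc hI2[OF r]] by simp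
    then show "((\<lambda>t. U (r, t) * Utt (r, t)) has_integral - I2 r) {0..T}"
      by (simp add: power2_eq_square mult.commute)
  qed
  define G where "G r = f r * (D r - psi r * E r)" for r
  define Gd where "Gd r = fp r * (D r - psi r * E r) + f r * (D2 r - (dpsi r * E r + psi r * (2 * D r)))" for r
  have dG: "\<And>r. r > r0 \<Longrightarrow> (G has_real_derivative Gd r) (at r)"
  proof -
    fix r assume r: "r > r0"
    have "((\<lambda>r. D r - psi r * E r) has_real_derivative (D2 r - (dpsi r * E r + 2 * D r * psi r))) (at r)"
      by (rule DERIV_diff[OF dD[OF r] DERIV_mult[OF dpsi_d[OF r] dE[OF r]]])
    from DERIV_mult[OF df[OF r] this]
    show "(G has_real_derivative Gd r) (at r)"
      unfolding G_def[abs_def] Gd_def by (simp add: algebra_simps)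
  qed
  have Gd_nonneg: "\<And>r. r > r0 \<Longrightarrow> Gd r \<ge> 0"
  proof -
    fix r assume r: "r > r0"
    have fr: "f r > 0" using fpos r by simp
    define gr where "gr t = fp r * (U (r, t) * Ur (r, t) - psi r * (U (r, t))^2)
        + f r * (Ur (r, t) * Ur (r, t) + U (r, t) * Urr (r, t) - dpsi r * (U (r, t))^2 - psi r * (2 * U (r, t) * Ur (r, t)))" for t
    have "((\<lambda>t. fp r * (U (r, t) * Ur (r, t)) - (fp r * psi r) * (U (r, t))^2
               + f r * (Ur (r, t) * Ur (r, t) + U (r, t) * Urr (r, t)) - (f r * dpsi r) * (U (r, t))^2
               - (f r * psi r * 2) * (U (r, t) * Ur (r, t))) has_integral
          (fp r * D r - (fp r * psi r) * E r + f r * D2 r - (f r * dpsi r) * E r - (f r * psi r * 2) * D r)) {0..T}"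
      by (intro has_integral_diff has_integral_add has_integral_mult_right hE[OF r] hD[OF r] hD2[OF r])
    then have hg: "(gr has_integral Gd r) {0..T}"
      unfolding gr_def Gd_def by (simp add: algebra_simps)
    have hl: "((\<lambda>t. (-1 / f r) * (U (r, t) * Utt (r, t))) has_integral ((-1 / f r) * (- I2 r))) {0..T}"
      by (rule has_integral_mult_right[OF hUUtt[OF r]])
    have le: "(-1 / f r) * (U (r, t) * Utt (r, t)) \<le> gr t" for t
    proof -
      have rp: "r > 0" using rpos r by simp
      have Ar: "A r \<noteq> 0" using Ane r A_def by simp
      have V: "VSk ell K mu k r = fp r * psi r + f r * dpsi r + f r * (psi r)^2 + Q r"
        using V_ident[of r mu k K ell, OF rp _ ell_pos] Ar unfolding fp_def psi_def dpsi_def Q_def A_def f_def mm_def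
        by simp
      have "gr t = f r * (Ur (r, t) - psi r * U (r, t))^2 + Q r * (U (r, t))^2 - U (r, t) * Utt (r, t) / f r"
        unfolding gr_def
        by (rule key_pointwise[OF fr V]) (use eq[OF r, of t] in \<open>simp add: f_def fp_def\<close>)
      moreover have "Q r \<ge> 0" unfolding Q_def using mm_pos rp Apos[of r] r by simp
      ultimately show ?thesis using fr by (simp add: divide_simps)
    qed
    have "(-1 / f r) * (- I2 r) \<le> Gd r"
      by (rule has_integral_le[OF hl hg]) (use le in auto)
    moreover have "(-1 / f r) * (- I2 r) \<ge> 0" using I2_nonneg[OF r] fr by simp
    ultimately show "Gd r \<ge> 0" by linarith
  qed
  have G_mono: "\<And>a b. r0 < a \<Longrightarrow> a \<le> b \<Longrightarrow> G a \<le> G b"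
    by (rule deriv_nonneg_imp_mono[where g=G and g'=Gd]) (auto intro: dG Gd_nonneg)
  define W where "W r = E r * (mm + 6*mu/r)^2" for r
  have Bpos: "\<And>r. r > r0 \<Longrightarrow> mm + 6*mu/r > 0"
  proof -
    fix r assume r: "r > r0"
    have "mm + 6*mu/r = A r / r" using rpos[of r] r unfolding A_def by (simp add: field_simps)
    then show "mm + 6*mu/r > 0" using Apos[of r] rpos[of r] r by simp
  qed
  define Bm where "Bm = mm + 6*\<bar>mu\<bar>/r0"
  have Bm: "\<And>r. r > r0 \<Longrightarrow> (mm + 6*mu/r)^2 \<le> Bm^2"
  proof -
    fix r assume r: "r > r0"
    have "6*mu/r \<le> 6*\<bar>mu\<bar>/r" using rpos[of r] r by (intro divide_right_mono) auto
    also have "\<dots> \<le> 6*\<bar>mu\<bar>/r0" using r r0_pos by (intro divide_left_mono) auto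
    finally have "mm + 6*mu/r \<le> Bm" unfolding Bm_def by simp
    then show "(mm + 6*mu/r)^2 \<le> Bm^2" using Bpos[OF r] by (intro power_mono) auto
  qed
  have Bm_pos: "Bm > 0" using Bpos[of "r0+1"] Bm[of "r0+1"]
    by (smt (verit) Bm_def abs_ge_zero divide_nonneg_pos mm_pos r0_pos)
  have W_nonneg: "\<And>r. r > r0 \<Longrightarrow> W r \<ge> 0" unfolding W_def using E_nonneg by simp
  have E_ge_W: "\<And>r. r > r0 \<Longrightarrow> E r \<ge> W r / Bm^2"
  proof -
    fix r assume r: "r > r0"
    have "W r \<le> E r * Bm^2" unfolding W_def using Bm[OF r] E_nonneg[OF r] by (intro mult_left_mono) auto
    then show "E r \<ge> W r / Bm^2" using Bm_pos by (simp add: divide_simps)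
  qed
  have dW: "\<And>r. r > r0 \<Longrightarrow> (W has_real_derivative 2 * (mm + 6*mu/r)^2 * G r / f r) (at r)"
  proof -
    fix r assume r: "r > r0"
    have r0': "r \<noteq> 0" using rpos[of r] r by simp
    have dB: "((\<lambda>r. (mm + 6*mu/r)^2) has_real_derivative (2 * (mm + 6*mu/r) * (- 6*mu/r^2))) (at r)"
    proof -
      have "((\<lambda>r. 6*mu/r) has_real_derivative (- 6*mu/r^2)) (at r)"
        using DERIV_cdivide[OF DERIV_inverse[OF r0'], of "1/(6*mu)"] r0'
        by (auto intro!: derivative_eq_intros simp: power2_eq_square field_simps)
      then have "((\<lambda>r. mm + 6*mu/r) has_real_derivative (- 6*mu/r^2)) (at r)"
        using DERIV_add[OF DERIV_const] by fastforce
      from DERIV_power[OF this, of 2]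
      have d2: "((\<lambda>r. (mm + 6*mu/r)^2) has_real_derivative (real 2 * (- 6*mu/r^2 * (mm + 6*mu/r)^(2 - Suc 0)))) (at r)" .
      have "real 2 * (- 6*mu/r^2 * (mm + 6*mu/r)^(2 - Suc 0)) = 2 * (mm + 6*mu/r) * (- 6*mu/r^2)" by simp
      with d2 show ?thesis by (simp only:)
    qed
    have "(W has_real_derivative (2 * D r * (mm + 6*mu/r)^2 + 2 * (mm + 6*mu/r) * (- 6*mu/r^2) * E r)) (at r)"
      unfolding W_def[abs_def] by (rule DERIV_mult[OF dE[OF r] dB])
    moreover have "2 * D r * (mm + 6*mu/r)^2 + 2 * (mm + 6*mu/r) * (- 6*mu/r^2) * E r = 2 * (mm + 6*mu/r)^2 * G r / f r"
    proof -
      have fr: "f r \<noteq> 0" using fpos[OF r] by simp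
      have a0: "6*mu + mm*r \<noteq> 0" using Ane r by simp
      define a where "a = mm + 6*mu/r"
      have apos: "a > 0" unfolding a_def using Bpos[OF r] .
      have ra: "r^2 * a = r * A r" unfolding a_def A_def using r0' by (simp add: field_simps power2_eq_square)
      have ps: "psi r = 6*mu/(r^2 * a)" unfolding ra psi_def ..
      have "2 * a^2 * G r / f r = 2 * a^2 * (D r - psi r * E r)"
        unfolding G_def using fr by simp
      also have "\<dots> = 2 * D r * a^2 + 2 * a * (- 6*mu/r^2) * E r"
        unfolding ps using apos r0' by (simp add: field_simps power2_eq_square)
      finally show ?thesis unfolding a_def by simp
    qed
    ultimately show "(W has_real_derivative 2 * (mm + 6*mu/r)^2 * G r / f r) (at r)" by simp
  qed
  have E_cont: "\<And>a b. r0 < a \<Longrightarrow> continuous_on {a..b} E"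
  proof (intro continuous_at_imp_continuous_on ballI)
    fix a b x :: real assume "r0 < a" "x \<in> {a..b}"
    then have "x > r0" by auto
    then show "isCont E x" using dE DERIV_isCont by blast
  qed
  have noint: "\<And>r2 e. r2 > r0 \<Longrightarrow> e > 0 \<Longrightarrow> \<not> (\<forall>r\<ge>r2. E r \<ge> e)"
  proof
    fix r2 e assume r2: "r2 > r0" and e: "e > 0" and lb: "\<forall>r\<ge>r2. E r \<ge> e"
    define Itot where "Itot = integral (Om \<times> {0..T}) (\<lambda>p. (U p)^2)"
    define R where "R = r2 + Itot / e + 1"
    have L2': "(\<lambda>p. (U p)^2) integrable_on (Om \<times> {0..T})" using L2 unfolding Om_def T_def .
    have Ipos: "Itot \<ge> 0" unfolding Itot_def using L2' by (intro integral_nonneg) auto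
    have R: "R > r2" unfolding R_def using Ipos e by (simp add: add_nonneg_pos)
    have box: "cbox (r2, 0) (R, T) = {r2..R} \<times> {0..T}" unfolding cbox_Pair_eq by (simp only: cbox_interval)
    have cbox_sub: "cbox (r2, 0) (R, T) \<subseteq> Om \<times> {0..T}" unfolding box Om_def using r2 by auto
    have cc: "continuous_on (cbox (r2, 0) (R, T)) (\<lambda>p. (U p)^2)"
      by (intro continuous_intros continuous_on_subset[OF cU]) (use cbox_sub Om_def in auto)
    have "integral (cbox (r2, 0) (R, T)) (\<lambda>p. (U p)^2) = integral (cbox r2 R) (\<lambda>x. integral (cbox 0 T) (\<lambda>y. (U (x, y))^2))"
      by (rule integral_prod_continuous[OF cc])
    also have "\<dots> = integral {r2..R} E" unfolding E_def[abs_def] cbox_interval ..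
    finally have eqI: "integral (cbox (r2, 0) (R, T)) (\<lambda>p. (U p)^2) = integral {r2..R} E" .
    have "e * (R - r2) = integral {r2..R} (\<lambda>_. e)" using R by simp
    also have "\<dots> \<le> integral {r2..R} E"
      by (rule integral_le) (use lb E_cont[of r2 R] r2 integrable_continuous_interval in auto)
    also have "\<dots> \<le> Itot" unfolding eqI[symmetric] Itot_def
      by (rule integral_subset_le[OF cbox_sub integrable_continuous[OF cc] L2']) auto
    finally have "e * (R - r2) \<le> Itot" .
    moreover have "e * (R - r2) = Itot + e" unfolding R_def using e by (simp add: field_simps)
    ultimately show False using e by simp
  qed
  have G_nonpos: "\<And>r1. r1 > r0 \<Longrightarrow> G r1 \<le> 0"
  proof (rule ccontr)
    fix r1 assume r1: "r1 > r0" and "\<not> G r1 \<le> 0"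
    then have G1: "G r1 > 0" by simp
    have Wpos': "\<And>r. r \<ge> r1 \<Longrightarrow> 2 * (mm + 6*mu/r)^2 * G r / f r > 0"
    proof -
      fix r assume r: "r \<ge> r1"
      have "G r \<ge> G r1" using G_mono r1 r by simp
      then show "2 * (mm + 6*mu/r)^2 * G r / f r > 0"
        using G1 fpos[of r] Bpos[of r] r r1 by simp
    qed
    have "W r1 < W (r1 + 1)"
    proof (rule DERIV_pos_imp_increasing[where f = W])
      fix x assume x: "r1 \<le> x" "x \<le> r1 + 1"
      then show "\<exists>y. DERIV W x :> y \<and> y > 0" using dW[of x] Wpos'[of x] r1 by auto
    qed simp
    then have w: "W (r1 + 1) > 0" using W_nonneg[OF r1] by simp
    have "\<forall>r\<ge>r1 + 1. E r \<ge> W (r1 + 1) / Bm^2"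
    proof (intro allI impI)
      fix r assume r: "r \<ge> r1 + 1"
      have "W (r1 + 1) \<le> W r"
        by (rule deriv_nonneg_imp_mono[where g = W and g' = "\<lambda>r. 2 * (mm + 6*mu/r)^2 * G r / f r"])
           (use dW Wpos' r1 r in \<open>auto simp: less_imp_le\<close>)
      then have "W (r1 + 1) / Bm^2 \<le> W r / Bm^2" using Bm_pos by (simp add: divide_right_mono)
      also have "\<dots> \<le> E r" using E_ge_W[of r] r r1 by simp
      finally show "E r \<ge> W (r1 + 1) / Bm^2" .
    qed
    moreover have "W (r1 + 1) / Bm^2 > 0" using w Bm_pos by simp
    ultimately show False using noint[of "r1 + 1" "W (r1 + 1) / Bm^2"] r1 by simp
  qed
  have G_nonneg: "\<And>r2. r2 > r0 \<Longrightarrow> G r2 \<ge> 0"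
  proof (rule ccontr)
    fix r2 assume r2: "r2 > r0" and "\<not> G r2 \<ge> 0"
    then have G2: "G r2 < 0" by simp
    obtain M where M: "M > 0" "\<forall>s. r0 \<le> s \<and> s \<le> r2 \<longrightarrow> fBH ell K mu s \<le> M * (s - r0)"
      using f_upper_near[of r2] r2 by auto
    obtain B where B: "\<forall>r t. r0 < r \<and> r \<le> r2 \<longrightarrow> \<bar>U (r, t)\<bar> \<le> B" using bnd[OF r2] by blast
    define a0 where "a0 = A r0 / r2"
    have a0: "a0 > 0" unfolding a0_def using Apos[of r0] r2 r0_pos by simp
    have Blow: "\<And>r. r0 < r \<Longrightarrow> r \<le> r2 \<Longrightarrow> (mm + 6*mu/r)^2 \<ge> a0^2"
    proof -
      fix r assume r: "r0 < r" "r \<le> r2"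
      have rp: "r > 0" using rpos[of r] r by simp
      have e1: "mm + 6*mu/r = A r / r" using rp unfolding A_def by (simp add: field_simps)
      have "A r0 \<le> A r" unfolding A_def using mm_pos r by simp
      then have "A r0 / r \<le> A r / r" using rp by (simp add: divide_right_mono)
      moreover have "A r0 / r2 \<le> A r0 / r" using Apos[of r0] rp r by (intro divide_left_mono) auto
      ultimately have "a0 \<le> mm + 6*mu/r" unfolding a0_def e1 by simp
      then show "(mm + 6*mu/r)^2 \<ge> a0^2" using a0 by (intro power_mono) auto
    qed
    define \<beta> where "\<beta> = -2 * a0^2 * G r2 / M"
    have \<beta>: "\<beta> > 0"
    proof -
      have "2 * a0^2 * (- G r2) > 0" using a0 G2 by (intro mult_pos_pos) auto
      moreover have "\<beta> = (2 * a0^2 * (- G r2)) / M" unfolding \<beta>_def by simp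
      ultimately show ?thesis using M by (simp only: divide_pos_pos)
    qed
    have Wd_le: "\<And>r. r0 < r \<Longrightarrow> r \<le> r2 \<Longrightarrow> 2 * (mm + 6*mu/r)^2 * G r / f r \<le> - \<beta> / (r - r0)"
    proof -
      fix r assume r: "r0 < r" "r \<le> r2"
      have fr: "f r > 0" using fpos r by simp
      have fM: "f r \<le> M * (r - r0)" using M r unfolding f_def by simp
      have Gr: "G r \<le> G r2" using G_mono r by simp
      have "(mm + 6*mu/r)^2 * G r \<le> (mm + 6*mu/r)^2 * G r2"
        using Gr by (intro mult_left_mono) auto
      also have "\<dots> \<le> a0^2 * G r2" using Blow[OF r] G2 by (intro mult_right_mono_neg) auto
      finally have "2 * (mm + 6*mu/r)^2 * G r / f r \<le> (2 * a0^2 * G r2) / f r"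
        using fr by (simp add: divide_right_mono)
      also have "\<dots> \<le> (2 * a0^2 * G r2) / (M * (r - r0))"
      proof (rule divide_left_mono_neg[OF fM])
        show "2 * a0^2 * G r2 \<le> 0" using a0 G2 by (intro mult_nonneg_nonpos) auto
        show "0 < f r * (M * (r - r0))" using fr M r by simp
      qed
      also have "\<dots> = - \<beta> / (r - r0)" unfolding \<beta>_def using M r by (simp add: field_simps)
      finally show "2 * (mm + 6*mu/r)^2 * G r / f r \<le> - \<beta> / (r - r0)" .
    qed
    define h where "h r = W r + \<beta> * ln (r - r0)" for r
    have hmono: "\<And>r. r0 < r \<Longrightarrow> r \<le> r2 \<Longrightarrow> h r2 \<le> h r"
    proof -
      fix r assume r: "r0 < r" "r \<le> r2"
      have "- h r \<le> - h r2"
      proof (rule deriv_nonneg_imp_mono[where g = "\<lambda>r. - h r" and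
            g' = "\<lambda>x. - (2 * (mm + 6*mu/x)^2 * G x / f x + \<beta> * (1 / (x - r0)))"])
        fix x assume x: "x \<in> {r..r2}"
        then have xr: "x > r0" using r by auto
        have dl: "((\<lambda>x. ln (x - r0)) has_real_derivative (1 / (x - r0))) (at x)"
        proof -
          have "((\<lambda>x. x - r0) has_real_derivative 1) (at x)" by (auto intro!: derivative_eq_intros)
          from DERIV_chain2[OF DERIV_ln_divide this] xr show ?thesis by simp
        qed
        show "((\<lambda>r. - h r) has_real_derivative - (2 * (mm + 6*mu/x)^2 * G x / f x + \<beta> * (1 / (x - r0)))) (at x)"
          unfolding h_def by (intro DERIV_minus DERIV_add dW[OF xr] DERIV_cmult dl)
        have "2 * (mm + 6*mu/x)^2 * G x / f x \<le> - \<beta> / (x - r0)" using Wd_le[of x] x r by auto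
        then show "- (2 * (mm + 6*mu/x)^2 * G x / f x + \<beta> * (1 / (x - r0))) \<ge> 0" by simp
      qed (use r in auto)
      then show "h r2 \<le> h r" by simp
    qed
    define Wmax where "Wmax = T * B^2 * Bm^2"
    have Wle: "\<And>r. r0 < r \<Longrightarrow> r \<le> r2 \<Longrightarrow> W r \<le> Wmax"
    proof -
      fix r assume r: "r0 < r" "r \<le> r2"
      have "E r \<le> measure lborel {0..T} *\<^sub>R B^2"
      proof (rule has_integral_le[OF hE has_integral_const_real])
        fix t assume "t \<in> {0..T}"
        have "\<bar>U (r, t)\<bar> \<le> B" using B r by simp
        then show "(U (r, t))^2 \<le> B^2" by (metis abs_ge_zero power2_abs power_mono)
      qed (use r in simp)
      then have Er: "E r \<le> T * B^2" using T by simp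
      have "W r \<le> (T * B^2) * Bm^2" unfolding W_def
        by (rule mult_mono[OF Er Bm]) (use r E_nonneg[of r] T in auto)
      then show "W r \<le> Wmax" unfolding Wmax_def by simp
    qed
    have Wmax_nonneg: "Wmax \<ge> 0" unfolding Wmax_def using T by simp
    define r where "r = r0 + (r2 - r0) * exp (- (Wmax / \<beta>) - 1)"
    have "Wmax / \<beta> \<ge> 0" using Wmax_nonneg \<beta> by simp
    then have ex: "exp (- (Wmax / \<beta>) - 1) < 1" by simp
    have "(r2 - r0) * exp (- (Wmax / \<beta>) - 1) \<le> (r2 - r0) * 1"
      using ex r2 by (intro mult_left_mono) auto
    then have "(r2 - r0) * exp (- (Wmax / \<beta>) - 1) \<le> r2 - r0" by simp
    moreover have "(r2 - r0) * exp (- (Wmax / \<beta>) - 1) > 0" using r2 by simp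
    ultimately have rr: "r0 < r" "r \<le> r2" unfolding r_def by linarith+
    have lnr: "ln (r - r0) = ln (r2 - r0) - (Wmax / \<beta>) - 1"
      unfolding r_def using r2 by (simp add: ln_mult)
    have "h r2 \<le> h r" using hmono rr by simp
    then have "W r2 + \<beta> * ln (r2 - r0) \<le> W r + \<beta> * (ln (r2 - r0) - (Wmax / \<beta>) - 1)"
      unfolding h_def lnr .
    then have "W r2 + Wmax + \<beta> \<le> W r" using \<beta> by (simp add: algebra_simps)
    moreover have "W r2 \<ge> 0" using W_nonneg r2 by simp
    ultimately show False using Wle[OF rr] \<beta> by simp
  qed
  have G0: "\<And>r. r > r0 \<Longrightarrow> G r = 0" using G_nonneg G_nonpos by (meson order_antisym)
  have dW0: "\<And>r. r > r0 \<Longrightarrow> (W has_real_derivative 0) (at r)" using dW G0 by fastforce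
  have Wconst: "\<And>r. r > r0 \<Longrightarrow> W r = W (r0 + 1)"
  proof -
    fix r assume r: "r > r0"
    have mono1: "\<And>a b. r0 < a \<Longrightarrow> a \<le> b \<Longrightarrow> W a \<le> W b"
      by (rule deriv_nonneg_imp_mono[where g = W and g' = "\<lambda>_. 0"]) (auto intro: dW0)
    have mono2: "\<And>a b. r0 < a \<Longrightarrow> a \<le> b \<Longrightarrow> - W a \<le> - W b"
    proof -
      fix a b assume ab: "r0 < a" "a \<le> b"
      show "- W a \<le> - W b"
      proof (rule deriv_nonneg_imp_mono[where g = "\<lambda>r. - W r" and g' = "\<lambda>_. 0"])
        fix x assume "x \<in> {a..b}"
        then have "x > r0" using ab by auto
        from DERIV_minus[OF dW0[OF this]] show "((\<lambda>r. - W r) has_real_derivative 0) (at x)" by simp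
      qed (use ab in auto)
    qed
    show "W r = W (r0 + 1)"
    proof (cases "r \<le> r0 + 1")
      case True
      then show ?thesis using mono1[of r "r0+1"] mono2[of r "r0+1"] r by simp
    next
      case False
      then show ?thesis using mono1[of "r0+1" r] mono2[of "r0+1" r] r0_pos by simp
    qed
  qed
  have W0: "W (r0 + 1) = 0"
  proof (rule ccontr)
    assume "W (r0 + 1) \<noteq> 0"
    then have w: "W (r0 + 1) > 0" using W_nonneg[of "r0+1"] by simp
    have "\<forall>r\<ge>r0 + 1. E r \<ge> W (r0 + 1) / Bm^2"
    proof (intro allI impI)
      fix r assume r: "r \<ge> r0 + 1"
      then have "r > r0" by simp
      then show "E r \<ge> W (r0 + 1) / Bm^2" using E_ge_W[of r] Wconst[of r] by simp
    qed
    moreover have "W (r0 + 1) / Bm^2 > 0" using w Bm_pos by simp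
    ultimately show False using noint[of "r0 + 1" "W (r0 + 1) / Bm^2"] by simp
  qed
  have E0: "\<And>r. r > r0 \<Longrightarrow> E r = 0"
  proof -
    fix r assume r: "r > r0"
    have "E r * (mm + 6*mu/r)^2 = 0" using Wconst[OF r] W0 W_def by simp
    then show "E r = 0" using Bpos[OF r] by simp
  qed
  show ?thesis
  proof (intro allI impI)
    fix r t assume rt: "r > r0 \<and> 0 \<le> t \<and> t \<le> tperiod ell K mu r0"
    then have r: "r > r0" and t: "t \<in> cbox 0 T" unfolding T_def by (auto simp: cbox_interval)
    have "(U (r, t))^2 = 0"
    proof (rule has_integral_0_cbox_imp_0[where f = "\<lambda>t. (U (r, t))^2" and a = 0 and b = T])
      show "continuous_on (cbox 0 T) (\<lambda>t. (U (r, t))^2)"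
        unfolding cbox_interval by (intro continuous_intros slice[OF cU r])
      show "\<And>x. x \<in> box 0 T \<Longrightarrow> 0 \<le> (U (r, x))^2" by simp
      show "((\<lambda>t. (U (r, t))^2) has_integral 0) (cbox 0 T)"
        using hE[OF r] E0[OF r] unfolding cbox_interval by simp
      show "box 0 T \<noteq> {}" using T by simp
    qed (rule t)
    then show "U (r, t) = 0" by simp
  qed
qed
end


theorem mainTheorem7:
  fixes ell mu K k r0 :: real
    and u :: "real \<times> real \<Rightarrow> real"
    and U Ur Ut Urr Urt Utr Utt :: "real \<times> real \<Rightarrow> real"
  assumes ell_pos: "ell > 0"
    and K_range: "K \<in> {-1, 0, 1}"
    and mu_cond: "(K \<in> {0, 1} \<longrightarrow> mu > 0) \<and> (K = -1 \<longrightarrow> mu > - ell / (3 * sqrt 3))"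
    and r0_pos: "r0 > 0"
    and r0_zero: "fBH ell K mu r0 = 0"
    and r0_largest: "\<forall>r>r0. fBH ell K mu r > 0"
    and k_pos: "k > 0"
    and k_big: "k^2 > max 0 (2 * K)"
    and u_cont: "continuous_on UNIV u"
    and U_def: "\<forall>p. U p = u (polar_chart ell K mu r0 p)"
    and U_C2: "C2_partials_on ({r0<..} \<times> UNIV) U Ur Ut Urr Urt Utr Utt"
    and U_eq: "\<forall>r t. r > r0 \<longrightarrow>
        - (deriv (fBH ell K mu) r * Ur (r, t) + fBH ell K mu r * Urr (r, t)
           + Utt (r, t) / fBH ell K mu r)
        + VSk ell K mu k r * U (r, t) = 0"
    and U_L2: "set_integrable lborel ({r0<..} \<times> {0..tperiod ell K mu r0}) (\<lambda>p. (U p)^2)"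
  shows "\<forall>x. u x = 0"
proof -
  interpret bh ell mu K k r0
    by (rule bh.intro) (fact ell_pos K_range mu_cond r0_pos r0_zero r0_largest k_pos k_big)+
  have per: "\<And>r t. U (r, t + tperiod ell K mu r0) = U (r, t)"
    using U_def chart_periodic by simp
  have eq': "\<And>r t. r > r0 \<Longrightarrow> - ((2*r/ell^2 + 2*mu/r^2) * Ur (r, t) + fBH ell K mu r * Urr (r, t)
           + Utt (r, t) / fBH ell K mu r) + VSk ell K mu k r * U (r, t) = 0"
  proof -
    fix r t assume r: "r > r0"
    have "deriv (fBH ell K mu) r = 2*r/ell^2 + 2*mu/r^2"
      using r r0_pos ell_pos by (intro DERIV_imp_deriv fBH_deriv) auto
    then show "- ((2*r/ell^2 + 2*mu/r^2) * Ur (r, t) + fBH ell K mu r * Urr (r, t)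
           + Utt (r, t) / fBH ell K mu r) + VSk ell K mu k r * U (r, t) = 0"
      using U_eq r by metis
  qed
  have L2': "(\<lambda>p. (U p)^2) integrable_on ({r0<..} \<times> {0..tperiod ell K mu r0})"
    by (rule set_borel_integral_eq_integral(1)[OF U_L2])
  have bnd: "\<And>r2. r2 > r0 \<Longrightarrow> \<exists>B. \<forall>r t. r0 < r \<and> r \<le> r2 \<longrightarrow> \<bar>U (r, t)\<bar> \<le> B"
    using U_bounded[OF u_cont] U_def by simp
  have Uz: "\<forall>r t. r > r0 \<and> 0 \<le> t \<and> t \<le> tperiod ell K mu r0 \<longrightarrow> U (r, t) = 0"
    by (rule U_vanish[OF per U_C2 eq' L2' bnd])
  have nz: "\<And>x. x \<noteq> 0 \<Longrightarrow> u x = 0"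
  proof -
    fix x :: "real \<times> real" assume x: "x \<noteq> 0"
    obtain r t where rt: "r > r0" "0 \<le> t" "t \<le> tperiod ell K mu r0" "polar_chart ell K mu r0 (r, t) = x"
      using chart_surj[OF x] by blast
    have "u x = U (r, t)" using U_def rt by simp
    then show "u x = 0" using Uz rt by simp
  qed
  have z: "u 0 = 0"
  proof -
    have "isCont u 0" using u_cont by (metis UNIV_I continuous_on_eq_continuous_at open_UNIV)
    then have l1: "(u \<longlongrightarrow> u 0) (at 0)" by (simp add: isCont_def)
    have ev: "eventually (\<lambda>x. 0 = u x) (at (0::real\<times>real))"
      unfolding eventually_at_filter using nz by simp
    have l2: "(u \<longlongrightarrow> 0) (at 0)"
      using tendsto_cong[OF ev] tendsto_const by blast
    show ?thesis using tendsto_unique[OF at_neq_bot l1 l2] .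
  qed
  show ?thesis using nz z by metis
qed

end
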